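(* Assume $2k+1 \le n/4$. For every randomized algorithm that makes at most $n/4$ comparison queries and outputs a set of $2k+1$ elements, there exists an instance (with $n$ elements, $k$ of them corrupted) on which the probability that the output set contains the uncorrupted maximum is at most $3/4$.
   Context: Model: there are $n$ elements $x_1,\dots,x_n$, exactly $k$ of which are corrupted (unknown to the algorithm). For every pair of distinct elements the comparison graph (a tournament) specifies which one is larger. The comparison graph restricted to the $n-k$ uncorrupted elements is acyclic; comparisons involving corrupted elements may be oriented arbitrarily. The uncorrupted maximum is the uncorrupted element larger than every other uncorrupted element. An algorithm knows $n$ and $k$, may query the orientation of any pair (a comparison query), and outputs a set of elements. *)

theory Defs
  imports "HOL-Probability.Probability"
begin

text \<open>Elements are 0,...,n-1.  A comparison graph is a relation T where
  T i j means "element i is larger than element j".  Outside the element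
  range T is False (so queries of out-of-range pairs carry no information).\<close>

definition tournament :: "nat \<Rightarrow> (nat \<Rightarrow> nat \<Rightarrow> bool) \<Rightarrow> bool" where
  "tournament n T \<longleftrightarrow>
     (\<forall>i j. T i j \<longrightarrow> i < n \<and> j < n \<and> i \<noteq> j) \<and>
     (\<forall>i<n. \<forall>j<n. i \<noteq> j \<longrightarrow> (T i j \<longleftrightarrow> \<not> T j i))"

definition valid_instance :: "nat \<Rightarrow> nat \<Rightarrow> (nat \<Rightarrow> nat \<Rightarrow> bool) \<Rightarrow> nat set \<Rightarrow> bool" where
  "valid_instance n k T C \<longleftrightarrow>
     tournament n T \<and> C \<subseteq> {0..<n} \<and> card C = k \<and>
     acyclic {(i, j). i \<in> {0..<n} - C \<and> j \<in> {0..<n} - C \<and> T i j}"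

definition unc_max :: "nat \<Rightarrow> (nat \<Rightarrow> nat \<Rightarrow> bool) \<Rightarrow> nat set \<Rightarrow> nat \<Rightarrow> bool" where
  "unc_max n T C u \<longleftrightarrow> u \<in> {0..<n} - C \<and> (\<forall>v \<in> {0..<n} - C. v \<noteq> u \<longrightarrow> T u v)"

text \<open>Deterministic adaptive comparison algorithms as decision trees:
  Query i j f asks whether i is larger than j and continues with f answer.\<close>

datatype dtree = Query nat nat "bool \<Rightarrow> dtree" | Output "nat set"

primrec run :: "dtree \<Rightarrow> (nat \<Rightarrow> nat \<Rightarrow> bool) \<Rightarrow> nat set" where
  "run (Output S) T = S"
| "run (Query i j f) T = run (f (T i j)) T"

primrec num_queries :: "dtree \<Rightarrow> (nat \<Rightarrow> nat \<Rightarrow> bool) \<Rightarrow> nat" where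
  "num_queries (Output S) T = 0"
| "num_queries (Query i j f) T = Suc (num_queries (f (T i j)) T)"

text \<open>A randomized algorithm is a probability distribution over decision trees.\<close>

end

theory Submission
  imports Defs
begin

definition T0 :: "nat \<Rightarrow> nat \<Rightarrow> nat \<Rightarrow> bool" where
  "T0 n i j = (i < n \<and> j < n \<and> j < i)"

definition Tu :: "nat \<Rightarrow> nat \<Rightarrow> nat \<Rightarrow> nat \<Rightarrow> bool" where
  "Tu n u i j = (i < n \<and> j < n \<and> i \<noteq> j \<and> (i = u \<or> (j \<noteq> u \<and> j < i)))"

primrec touched :: "dtree \<Rightarrow> (nat \<Rightarrow> nat \<Rightarrow> bool) \<Rightarrow> nat set" where
  "touched (Output S) T = {}"
| "touched (Query i j f) T = {i, j} \<union> touched (f (T i j)) T"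

lemma touched_card: "finite (touched t T) \<and> card (touched t T) \<le> 2 * num_queries t T"
proof (induction t)
  case (Query i j f)
  have "card ({i, j} \<union> touched (f (T i j)) T) \<le> card {i,j} + card (touched (f (T i j)) T)"
    by (rule card_Un_le)
  also have "card {i,j} \<le> 2" by (simp add: card_insert_if)
  finally show ?case using Query.IH[of "f (T i j)"] by fastforce
qed simp

lemma run_same: "u \<notin> touched t (T0 n) \<Longrightarrow> run t (Tu n u) = run t (T0 n)
   \<and> num_queries t (Tu n u) = num_queries t (T0 n)"
proof (induction t)
  case (Query i j f)
  have "Tu n u i j = T0 n i j" using Query.prems by (auto simp: Tu_def T0_def)
  then show ?case using Query by auto
qed simp

lemma acyc_rank:
  assumes "\<And>a b. (a, b) \<in> r \<Longrightarrow> f b < (f a :: nat)"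
  shows "acyclic r"
proof -
  have "r\<inverse> \<subseteq> Wellfounded.measure f" using assms by auto
  then have "wf (r\<inverse>)" using wf_subset Wellfounded.wf_measure by blast
  then have "acyclic (r\<inverse>)" by (rule wf_acyclic)
  then show ?thesis by (simp add: acyclic_converse)
qed

lemma valid_T0: "k < n \<Longrightarrow> \<exists>C. valid_instance n k (T0 n) C"
proof -
  assume "k < n"
  obtain C where "C \<subseteq> {0..<n}" "card C = k" "finite C"
    using obtain_subset_with_card_n[of k "{0..<n}"] \<open>k < n\<close> by auto
  moreover have "tournament n (T0 n)" unfolding tournament_def T0_def by auto
  moreover have "acyclic {(i, j). i \<in> {0..<n} - C \<and> j \<in> {0..<n} - C \<and> T0 n i j}"
    by (rule acyc_rank[where f="\<lambda>x. x"]) (auto simp: T0_def)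
  ultimately show ?thesis unfolding valid_instance_def by blast
qed

lemma valid_Tu: "k < n \<Longrightarrow> u < n \<Longrightarrow> \<exists>C. valid_instance n k (Tu n u) C \<and> u \<notin> C"
proof -
  assume "k < n" "u < n"
  have "card ({0..<n} - {u}) = n - 1" using \<open>u < n\<close> by simp
  then obtain C where "C \<subseteq> {0..<n} - {u}" "card C = k" "finite C"
    using obtain_subset_with_card_n[of k "{0..<n} - {u}"] \<open>k < n\<close> by (metis Suc_pred' less_Suc_eq_le less_nat_zero_code nat_neq_iff)
  moreover have "tournament n (Tu n u)" unfolding tournament_def Tu_def by auto
  moreover have "acyclic {(i, j). i \<in> {0..<n} - C \<and> j \<in> {0..<n} - C \<and> Tu n u i j}"
    by (rule acyc_rank[where f="\<lambda>x. if x = u then n else x"]) (auto simp: Tu_def)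
  ultimately show ?thesis unfolding valid_instance_def by blast
qed

lemma unc_max_Tu: "u \<notin> C \<Longrightarrow> u < n \<Longrightarrow> unc_max n (Tu n u) C v \<longleftrightarrow> v = u"
  unfolding unc_max_def Tu_def by auto

theorem mainTheorem7:
  fixes n k :: nat and A :: "dtree pmf"
  assumes "real (2 * k + 1) \<le> real n / 4"
    and "\<forall>t \<in> set_pmf A. \<forall>T C. valid_instance n k T C \<longrightarrow>
            real (num_queries t T) \<le> real n / 4 \<and>
            run t T \<subseteq> {0..<n} \<and> card (run t T) = 2 * k + 1"
  shows "\<exists>T C. valid_instance n k T C \<and>
           measure_pmf.prob A {t. \<exists>u. unc_max n T C u \<and> u \<in> run t T} \<le> 3 / 4"
proof -
  have kn: "k < n" using assms(1) by linarith
  obtain C0 where C0: "valid_instance n k (T0 n) C0" using valid_T0[OF kn] by blast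
  define E where "E u = {t. u \<in> run t (Tu n u)}" for u
  define g where "g t = real (card {u \<in> {0..<n}. u \<in> run t (Tu n u)})" for t
  have gsum: "g t = (\<Sum>u<n. indicator (E u) t)" for t
  proof -
    have "(\<Sum>u<n. indicator (E u) t :: real) = (\<Sum>u<n. if u \<in> run t (Tu n u) then 1 else 0)"
      by (intro sum.cong) (auto simp: E_def indicator_def)
    also have "\<dots> = (\<Sum>u\<in>{u \<in> {..<n}. u \<in> run t (Tu n u)}. 1)"
      by (rule sum.inter_filter[symmetric]) simp
    also have "\<dots> = real (card {u \<in> {..<n}. u \<in> run t (Tu n u)})"
      by (rule real_of_card[symmetric])
    finally have 1: "(\<Sum>u<n. indicator (E u) t :: real) = real (card {u \<in> {..<n}. u \<in> run t (Tu n u)})" .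
    have 2: "{u \<in> {..<n}. u \<in> run t (Tu n u)} = {u \<in> {0..<n}. u \<in> run t (Tu n u)}"
      by (simp add: lessThan_atLeast0)
    show ?thesis unfolding g_def 1 2 ..
  qed
  have gbound: "g t \<le> 3 * real n / 4" if t: "t \<in> set_pmf A" for t
  proof -
    have q: "real (num_queries t (T0 n)) \<le> real n / 4" and S: "card (run t (T0 n)) = 2 * k + 1"
      using assms(2) t C0 by auto
    have sub: "{u \<in> {0..<n}. u \<in> run t (Tu n u)} \<subseteq> touched t (T0 n) \<union> run t (T0 n)"
    proof
      fix u assume "u \<in> {u \<in> {0..<n}. u \<in> run t (Tu n u)}"
      then have "u \<in> run t (Tu n u)" by simp
      then show "u \<in> touched t (T0 n) \<union> run t (T0 n)"
        using run_same[of u t n] by (cases "u \<in> touched t (T0 n)") simp_all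
    qed
    have fS: "finite (run t (T0 n))"
    proof (rule ccontr)
      assume "infinite (run t (T0 n))"
      then have "card (run t (T0 n)) = 0" by (rule card.infinite)
      then show False using S by simp
    qed
    have fT: "finite (touched t (T0 n))" and cT: "card (touched t (T0 n)) \<le> 2 * num_queries t (T0 n)"
      using touched_card by auto
    have "card {u \<in> {0..<n}. u \<in> run t (Tu n u)} \<le> card (touched t (T0 n) \<union> run t (T0 n))"
      using sub fT fS by (intro card_mono) auto
    also have "\<dots> \<le> card (touched t (T0 n)) + card (run t (T0 n))" by (rule card_Un_le)
    finally have c: "card {u \<in> {0..<n}. u \<in> run t (Tu n u)} \<le> 2 * num_queries t (T0 n) + (2 * k + 1)"
      using cT S by linarith
    have "g t \<le> real (2 * num_queries t (T0 n) + (2 * k + 1))" unfolding g_def using c by (simp only: of_nat_le_iff)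
    also have "\<dots> = 2 * real (num_queries t (T0 n)) + real (2 * k + 1)" by simp
    also have "\<dots> \<le> 3 * real n / 4" using q assms(1) by linarith
    finally show ?thesis .
  qed
  have integ: "integrable (measure_pmf A) (indicator (E u) :: dtree \<Rightarrow> real)" for u
    by (intro measure_pmf.integrable_const_bound[where B=1]) auto
  have gfun: "g = (\<lambda>t. \<Sum>u<n. indicator (E u) t)" using gsum by auto
  have intg: "integrable (measure_pmf A) g" unfolding gfun using integ by (rule Bochner_Integration.integrable_sum)
  have "(\<Sum>u<n. measure_pmf.prob A (E u)) = (\<Sum>u<n. measure_pmf.expectation A (indicator (E u)))"
    by simp
  also have "\<dots> = measure_pmf.expectation A g"
    unfolding gsum using integ by (simp add: integral_sum)
  also have "\<dots> \<le> measure_pmf.expectation A (\<lambda>_. 3 * real n / 4)"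
    using intg gbound
    by (intro integral_mono_AE) (auto simp: AE_measure_pmf_iff)
  also have "\<dots> = 3 * real n / 4" by simp
  finally have sumle: "(\<Sum>u<n. measure_pmf.prob A (E u)) \<le> 3 * real n / 4" .
  have "\<exists>u<n. measure_pmf.prob A (E u) \<le> 3 / 4"
  proof (rule ccontr)
    assume "\<not> ?thesis"
    then have "\<forall>u\<in>{..<n}. 3 / 4 < measure_pmf.prob A (E u)" by auto
    then have "(\<Sum>u<n. (3/4::real)) < (\<Sum>u<n. measure_pmf.prob A (E u))"
      using kn by (intro sum_strict_mono) auto
    then show False using sumle by simp
  qed
  then obtain u where u: "u < n" "measure_pmf.prob A (E u) \<le> 3 / 4" by blast
  obtain C where C: "valid_instance n k (Tu n u) C" "u \<notin> C" using valid_Tu[OF kn u(1)] by blast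
  have "{t. \<exists>v. unc_max n (Tu n u) C v \<and> v \<in> run t (Tu n u)} = E u"
    using unc_max_Tu[OF C(2) u(1)] by (auto simp: E_def)
  then show ?thesis using C u by metis
qed

end
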